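(* Let $G$ and $H$ be Left dead-ends, and assume that no subposition of $G$ or of $H$ has a dominated option. If $G$ and $H$ are equal (i.e. $G \geq H$ and $H \geq G$), then $G \cong H$.
   Context: All games are finite partizan games; $\cong$ denotes identity of game trees. $o(G)$ is the misère outcome class, ordered $\mathscr{L} > \mathscr{N} > \mathscr{R}$, $\mathscr{L} > \mathscr{P} > \mathscr{R}$. A universe is a set of games closed under options, disjunctive sums, conjugates, and forming $\{\mathscr{G}^L\mid\mathscr{G}^R\}$ from nonempty finite subsets of it. For a universe $\mathcal{U}$, $G\geq_\mathcal{U} H$ means $o(G+X)\geq o(H+X)$ for all $X\in\mathcal{U}$. A Left dead-end is a game every subposition of which has no Left option. For Left dead-ends $G,H$, write $G\geq H$ if $G\geq_\mathcal{U} H$ for every universe $\mathcal{U}$. A Right option $G^{R_1}$ of a Left dead-end $G$ is dominated if $G^{R_1}\geq G^{R_2}$ for some other Right option $G^{R_2}$ of $G$. *)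

theory Defs
  imports Main "HOL-Library.FSet"
begin

text \<open>A game is given by its finite set of Left options and its finite set of Right options.
  Equality of terms of this type is identity of game trees (G \<cong> H).\<close>
datatype game = Game (lopts: "game fset") (ropts: "game fset")

text \<open>Misere play: a player who cannot move wins.
  mis G = (Left wins moving first, Right wins moving first).\<close>
primrec mis :: "game \<Rightarrow> bool \<times> bool" where
  "mis (Game A B) =
     (A = {||} \<or> fBex (mis |`| A) (\<lambda>p. \<not> snd p),
      B = {||} \<or> fBex (mis |`| B) (\<lambda>p. \<not> fst p))"

datatype outcome = OL | ON | OP | OR

definition outc :: "game \<Rightarrow> outcome" where
  "outc G = (case mis G of
      (True, False) \<Rightarrow> OL
    | (True, True) \<Rightarrow> ON
    | (False, False) \<Rightarrow> OP
    | (False, True) \<Rightarrow> OR)"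

definition outcome_ge :: "outcome \<Rightarrow> outcome \<Rightarrow> bool" where
  "outcome_ge x y \<longleftrightarrow> x = y \<or> x = OL \<or> y = OR"

primrec neg :: "game \<Rightarrow> game" where
  "neg (Game A B) = Game (neg |`| B) (neg |`| A)"

text \<open>Disjunctive sum. plus_aux FA FB H computes G + H where FA (resp. FB) are the functions
  X \<mapsto> G^L + X (resp. X \<mapsto> G^R + X).\<close>
primrec plus_aux :: "(game \<Rightarrow> game) fset \<Rightarrow> (game \<Rightarrow> game) fset \<Rightarrow> game \<Rightarrow> game" where
  "plus_aux FA FB (Game C D) =
     Game ((\<lambda>f. f (Game C D)) |`| FA |\<union>| plus_aux FA FB |`| C)
          ((\<lambda>f. f (Game C D)) |`| FB |\<union>| plus_aux FA FB |`| D)"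

primrec gplus :: "game \<Rightarrow> game \<Rightarrow> game" where
  "gplus (Game A B) = plus_aux (gplus |`| A) (gplus |`| B)"

lemma gplus_Game:
  "gplus (Game A B) (Game C D) =
     Game ((\<lambda>a. gplus a (Game C D)) |`| A |\<union>| (\<lambda>c. gplus (Game A B) c) |`| C)
          ((\<lambda>b. gplus b (Game C D)) |`| B |\<union>| (\<lambda>d. gplus (Game A B) d) |`| D)"
proof -
  have "plus_aux (gplus |`| A) (gplus |`| B) (Game C D) =
     Game ((\<lambda>a. gplus a (Game C D)) |`| A |\<union>| (\<lambda>c. plus_aux (gplus |`| A) (gplus |`| B) c) |`| C)
          ((\<lambda>b. gplus b (Game C D)) |`| B |\<union>| (\<lambda>d. plus_aux (gplus |`| A) (gplus |`| B) d) |`| D)"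
    by (simp add: fset.map_comp o_def)
  then show ?thesis by simp
qed

definition is_option :: "game \<Rightarrow> game \<Rightarrow> bool" where
  "is_option X G \<longleftrightarrow> X |\<in>| lopts G \<or> X |\<in>| ropts G"

inductive subpos :: "game \<Rightarrow> game \<Rightarrow> bool" where
  subpos_refl: "subpos G G"
| subpos_step: "subpos K G \<Longrightarrow> is_option X K \<Longrightarrow> subpos X G"

definition universe :: "game set \<Rightarrow> bool" where
  "universe U \<longleftrightarrow>
     (\<forall>G\<in>U. \<forall>X. is_option X G \<longrightarrow> X \<in> U) \<and>
     (\<forall>G\<in>U. \<forall>H\<in>U. gplus G H \<in> U) \<and>
     (\<forall>G\<in>U. neg G \<in> U) \<and>
     (\<forall>A B. A \<noteq> {||} \<and> B \<noteq> {||} \<and> fset A \<subseteq> U \<and> fset B \<subseteq> U \<longrightarrow> Game A B \<in> U)"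

definition ge_in :: "game set \<Rightarrow> game \<Rightarrow> game \<Rightarrow> bool" where
  "ge_in U G H \<longleftrightarrow> (\<forall>X\<in>U. outcome_ge (outc (gplus G X)) (outc (gplus H X)))"

definition left_dead_end :: "game \<Rightarrow> bool" where
  "left_dead_end G \<longleftrightarrow> (\<forall>K. subpos K G \<longrightarrow> lopts K = {||})"

text \<open>For Left dead-ends: G \<ge> H iff G \<ge>_U H for every universe U.\<close>
definition de_ge :: "game \<Rightarrow> game \<Rightarrow> bool" where
  "de_ge G H \<longleftrightarrow> (\<forall>U. universe U \<longrightarrow> ge_in U G H)"

definition has_dominated_option :: "game \<Rightarrow> bool" where
  "has_dominated_option G \<longleftrightarrow>
     (\<exists>R1 R2. R1 |\<in>| ropts G \<and> R2 |\<in>| ropts G \<and> R1 \<noteq> R2 \<and> de_ge R1 R2)"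

end

theory Submission
  imports Defs
begin

lemma fst_mis: "fst (mis G) \<longleftrightarrow> lopts G = {||} \<or> (\<exists>x. x |\<in>| lopts G \<and> \<not> snd (mis x))"
  by (cases G) auto

lemma snd_mis: "snd (mis G) \<longleftrightarrow> ropts G = {||} \<or> (\<exists>x. x |\<in>| ropts G \<and> \<not> fst (mis x))"
  by (cases G) auto

lemma lopts_gplus: "lopts (gplus G H) = (\<lambda>a. gplus a H) |`| lopts G |\<union>| gplus G |`| lopts H"
  by (cases G; cases H) (simp only: gplus_Game game.sel)

lemma ropts_gplus: "ropts (gplus G H) = (\<lambda>a. gplus a H) |`| ropts G |\<union>| gplus G |`| ropts H"
  by (cases G; cases H) (simp only: gplus_Game game.sel)

lemma outc_ge_iff:
  "outcome_ge (outc G) (outc H) \<longleftrightarrow>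
     (fst (mis H) \<longrightarrow> fst (mis G)) \<and> (snd (mis G) \<longrightarrow> snd (mis H))"
  by (cases "mis G"; cases "mis H") (auto simp: outcome_ge_def outc_def split: bool.splits)

lemma universe_UNIV: "universe UNIV"
  by (simp add: universe_def)

lemma de_ge_UNIV: "de_ge G H \<longleftrightarrow> ge_in UNIV G H"
  unfolding de_ge_def ge_in_def using universe_UNIV by blast

lemma ge_in_UNIV_iff: "ge_in UNIV G H \<longleftrightarrow>
  (\<forall>X. (fst (mis (gplus H X)) \<longrightarrow> fst (mis (gplus G X))) \<and>
       (snd (mis (gplus G X)) \<longrightarrow> snd (mis (gplus H X))))"
  unfolding ge_in_def outc_ge_iff by blast

lemma de_ge_trans: "de_ge A B \<Longrightarrow> de_ge B C \<Longrightarrow> de_ge A C"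
  unfolding de_ge_UNIV ge_in_UNIV_iff by blast

lemma subpos_trans: "subpos K A \<Longrightarrow> subpos A G \<Longrightarrow> subpos K G"
  by (induction rule: subpos.induct) (auto intro: subpos_step)

lemma subpos_ropt: "A |\<in>| ropts G \<Longrightarrow> subpos A G"
  by (rule subpos_step[OF subpos_refl]) (simp add: is_option_def)

lemma ldead_lopts: "left_dead_end G \<Longrightarrow> lopts G = {||}"
  by (simp add: left_dead_end_def subpos_refl)

lemma ldead_ropt: "left_dead_end G \<Longrightarrow> A |\<in>| ropts G \<Longrightarrow> left_dead_end A"
  unfolding left_dead_end_def using subpos_trans subpos_ropt by blast

lemma distinguisher:
  assumes "\<not> ge_in UNIV A B" "left_dead_end B"
  shows "\<exists>Z. snd (mis (gplus A Z)) \<and> \<not> snd (mis (gplus B Z))"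
proof -
  from assms(1) obtain X where
    X: "\<not> ((fst (mis (gplus B X)) \<longrightarrow> fst (mis (gplus A X))) \<and>
       (snd (mis (gplus A X)) \<longrightarrow> snd (mis (gplus B X))))"
    unfolding ge_in_UNIV_iff by blast
  show ?thesis
  proof (cases "snd (mis (gplus A X)) \<and> \<not> snd (mis (gplus B X))")
    case True then show ?thesis by blast
  next
    case False
    with X have f: "fst (mis (gplus B X))" "\<not> fst (mis (gplus A X))" by auto
    define Z where "Z = Game {||} {|X|}"
    have "gplus A X |\<in>| ropts (gplus A Z)" by (simp add: ropts_gplus Z_def)
    then have 1: "snd (mis (gplus A Z))" using f(2) snd_mis by blast
    have "\<not> snd (mis (gplus B Z))"
      unfolding snd_mis
    proof (intro notI, elim disjE exE conjE)
      assume "ropts (gplus B Z) = {||}"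
      then show False by (simp add: ropts_gplus Z_def)
    next
      fix x assume x: "x |\<in>| ropts (gplus B Z)" "\<not> fst (mis x)"
      then have "(\<exists>b. b |\<in>| ropts B \<and> x = gplus b Z) \<or> x = gplus B X"
        by (auto simp: ropts_gplus Z_def)
      then show False
      proof
        assume "\<exists>b. b |\<in>| ropts B \<and> x = gplus b Z"
        then obtain b where b: "b |\<in>| ropts B" "x = gplus b Z" by blast
        have "lopts b = {||}" using ldead_lopts ldead_ropt assms(2) b(1) by blast
        then have "lopts x = {||}" using b(2) by (simp add: lopts_gplus Z_def)
        then show False using x(2) fst_mis by blast
      next
        assume "x = gplus B X" then show False using x(2) f(1) by simp
      qed
    qed
    with 1 show ?thesis by blast
  qed
qed

lemma maintenance:
  assumes "left_dead_end G" "left_dead_end H" "ropts H \<noteq> {||}"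
    "ge_in UNIV G H" "A |\<in>| ropts G"
  shows "\<exists>B. B |\<in>| ropts H \<and> ge_in UNIV A B"
proof (rule ccontr)
  assume "\<not> ?thesis"
  then have "\<forall>B. B |\<in>| ropts H \<longrightarrow> (\<exists>Z. snd (mis (gplus A Z)) \<and> \<not> snd (mis (gplus B Z)))"
    using distinguisher ldead_ropt assms(2) by blast
  then obtain zf where zf: "\<And>B. B |\<in>| ropts H \<Longrightarrow>
      snd (mis (gplus A (zf B))) \<and> \<not> snd (mis (gplus B (zf B)))" by metis
  define X where "X = Game (zf |`| ropts H) {|Game {||} {||}|}"
  have lA: "lopts A = {||}" using ldead_lopts ldead_ropt assms(1,5) by blast
  have "\<not> fst (mis (gplus A X))"
    unfolding fst_mis
  proof (intro notI, elim disjE exE conjE)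
    assume "lopts (gplus A X) = {||}"
    then show False using assms(3) by (simp add: lopts_gplus X_def)
  next
    fix x assume "x |\<in>| lopts (gplus A X)" "\<not> snd (mis x)"
    then show False using lA zf by (auto simp: lopts_gplus X_def)
  qed
  moreover have "gplus A X |\<in>| ropts (gplus G X)" using assms(5) by (simp add: ropts_gplus)
  ultimately have s1: "snd (mis (gplus G X))" using snd_mis by blast
  have lH: "lopts H = {||}" using ldead_lopts assms(2) by blast
  have "\<not> snd (mis (gplus H X))"
    unfolding snd_mis
  proof (intro notI, elim disjE exE conjE)
    assume "ropts (gplus H X) = {||}"
    then show False by (simp add: ropts_gplus X_def)
  next
    fix x assume x: "x |\<in>| ropts (gplus H X)" "\<not> fst (mis x)"
    then have "(\<exists>b. b |\<in>| ropts H \<and> x = gplus b X) \<or> x = gplus H (Game {||} {||})"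
      by (auto simp: ropts_gplus X_def)
    then show False
    proof
      assume "\<exists>b. b |\<in>| ropts H \<and> x = gplus b X"
      then obtain b where b: "b |\<in>| ropts H" "x = gplus b X" by blast
      have "gplus b (zf b) |\<in>| lopts x" using b by (simp add: lopts_gplus X_def)
      then show False using x(2) zf[OF b(1)] fst_mis by blast
    next
      assume "x = gplus H (Game {||} {||})"
      then have "lopts x = {||}" using lH by (simp add: lopts_gplus)
      then show False using x(2) fst_mis by blast
    qed
  qed
  with s1 assms(4) show False unfolding ge_in_UNIV_iff by blast
qed

lemma empty_ropts:
  assumes "left_dead_end G" "ropts H = {||}" "lopts H = {||}" "ge_in UNIV H G"
  shows "ropts G = {||}"
proof (rule ccontr)
  assume ne: "ropts G \<noteq> {||}"
  define Zr where "Zr = Game {||} {||}"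
  have "snd (mis (gplus H Zr))" using assms(2) by (simp add: snd_mis ropts_gplus Zr_def)
  moreover have "\<not> snd (mis (gplus G Zr))"
    unfolding snd_mis
  proof (intro notI, elim disjE exE conjE)
    assume "ropts (gplus G Zr) = {||}" then show False using ne by (simp add: ropts_gplus Zr_def)
  next
    fix x assume x: "x |\<in>| ropts (gplus G Zr)" "\<not> fst (mis x)"
    then obtain a where a: "a |\<in>| ropts G" "x = gplus a Zr" by (auto simp: ropts_gplus Zr_def)
    have "lopts a = {||}" using ldead_lopts ldead_ropt assms(1) a(1) by blast
    then have "lopts x = {||}" using a(2) by (simp add: lopts_gplus Zr_def)
    then show False using x(2) fst_mis by blast
  qed
  ultimately show False using assms(4) unfolding ge_in_UNIV_iff by blast
qed

lemma opts_match:
  assumes "left_dead_end G" "left_dead_end H" "\<not> has_dominated_option G"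
    "ropts G \<noteq> {||}" "ropts H \<noteq> {||}"
    "ge_in UNIV G H" "ge_in UNIV H G" "A |\<in>| ropts G"
  shows "\<exists>B. B |\<in>| ropts H \<and> de_ge A B \<and> de_ge B A"
proof -
  obtain B where B: "B |\<in>| ropts H" "ge_in UNIV A B"
    using maintenance[OF assms(1,2,5,6,8)] by blast
  obtain A' where A': "A' |\<in>| ropts G" "ge_in UNIV B A'"
    using maintenance[OF assms(2,1,4,7) B(1)] by blast
  have "de_ge A A'" using B(2) A'(2) de_ge_trans de_ge_UNIV by blast
  then have "A = A'" using assms(3,8) A'(1) unfolding has_dominated_option_def by blast
  then show ?thesis using B A' de_ge_UNIV by blast
qed

lemma main_aux:
  "\<And>H. left_dead_end G \<Longrightarrow> left_dead_end H \<Longrightarrow>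
    \<forall>K. subpos K G \<longrightarrow> \<not> has_dominated_option K \<Longrightarrow>
    \<forall>K. subpos K H \<longrightarrow> \<not> has_dominated_option K \<Longrightarrow>
    de_ge G H \<Longrightarrow> de_ge H G \<Longrightarrow> G = H"
proof (induction G)
  case (Game LG RG)
  let ?G = "Game LG RG"
  obtain LH RH where Hd: "H = Game LH RH" by (cases H)
  have lg: "LG = {||}" using ldead_lopts[OF Game.prems(1)] by simp
  have lh: "LH = {||}" using ldead_lopts[OF Game.prems(2)] Hd by simp
  have geGH: "ge_in UNIV ?G H" and geHG: "ge_in UNIV H ?G"
    using Game.prems(5,6) de_ge_UNIV by auto
  have ndG: "\<not> has_dominated_option ?G" using Game.prems(3) subpos_refl by blast
  have ndH: "\<not> has_dominated_option H" using Game.prems(4) subpos_refl by blast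
  have IH: "A = B" if A: "A |\<in>| RG" and B: "B |\<in>| RH" and "de_ge A B" "de_ge B A" for A B
  proof -
    have A': "A |\<in>| ropts ?G" using A by simp
    have B': "B |\<in>| ropts H" using B Hd by simp
    show ?thesis
    proof (rule Game.IH(2))
      show "A \<in> fset RG" using A by simp
      show "left_dead_end A" using ldead_ropt[OF Game.prems(1) A'] .
      show "left_dead_end B" using ldead_ropt[OF Game.prems(2) B'] .
      show "\<forall>K. subpos K A \<longrightarrow> \<not> has_dominated_option K"
        using Game.prems(3) subpos_trans subpos_ropt[OF A'] by blast
      show "\<forall>K. subpos K B \<longrightarrow> \<not> has_dominated_option K"
        using Game.prems(4) subpos_trans subpos_ropt[OF B'] by blast
    qed (use that in auto)
  qed
  have "RG = RH"
  proof (cases "RG = {||} \<or> RH = {||}")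
    case True
    then show ?thesis
    proof
      assume e: "RG = {||}"
      then have "ropts H = {||}" using empty_ropts[OF Game.prems(2), of ?G] geGH lg by simp
      then show ?thesis using e Hd by simp
    next
      assume e: "RH = {||}"
      then have "ropts ?G = {||}" using empty_ropts[OF Game.prems(1), of H] geHG lh Hd by simp
      then show ?thesis using e by simp
    qed
  next
    case False
    show ?thesis
    proof (rule fset_eqI)
      fix x
      show "x |\<in>| RG \<longleftrightarrow> x |\<in>| RH"
      proof
        assume x: "x |\<in>| RG"
        obtain B where "B |\<in>| ropts H" "de_ge x B" "de_ge B x"
          using opts_match[OF Game.prems(1,2) ndG _ _ geGH geHG] x False Hd by auto
        then show "x |\<in>| RH" using IH x Hd by auto
      next
        assume x: "x |\<in>| RH"
        obtain A where "A |\<in>| ropts ?G" "de_ge x A" "de_ge A x"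
          using opts_match[OF Game.prems(2,1) ndH _ _ geHG geGH] x False Hd by auto
        then show "x |\<in>| RG" using IH x Hd by auto
      qed
    qed
  qed
  then show ?case using lg lh Hd by simp
qed

theorem mainTheorem2:
  assumes "left_dead_end G" and "left_dead_end H"
    and "\<forall>K. subpos K G \<longrightarrow> \<not> has_dominated_option K"
    and "\<forall>K. subpos K H \<longrightarrow> \<not> has_dominated_option K"
    and "de_ge G H" and "de_ge H G"
  shows "G = H"
  using main_aux assms by blast

end
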